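(* Let $$\alpha=1+\frac16\left(\sqrt[3]{54-6\sqrt{33}}+\sqrt[3]{54+6\sqrt{33}}\right)\approx 2.1915,\qquad \beta=1+\frac13\left(\sqrt[3]{54-6\sqrt{33}}+\sqrt[3]{54+6\sqrt{33}}\right)\approx 3.3830,$$ let $g(x)=\alpha x(1-x)$, $h(x)=\beta x(1-x)$, and let $$p_\pm=\frac{\beta+1\pm\sqrt{(\beta+1)(\beta-3)}}{2\beta}$$ be the period-2 points of $h$. Then $h\!\left(\frac{\alpha-1}{\alpha}\right)=p_+$, $g(p_-)=\frac{\alpha-1}{\alpha}$, $g\!\left(\frac{\beta-1}{\beta}\right)=p_-$, $g\!\left(\frac1\beta\right)=p_-$, and $g(p_+)=\frac1\beta$. Consequently the set $\Lambda=\left\{\frac{\alpha-1}{\alpha},\ \frac{\beta-1}{\beta},\ p_-,\ p_+,\ \frac1\beta\right\}$ consists of five points, satisfies $\Lambda=g(\Lambda)\cup h(\Lambda)$ (a 5-point toss-and-catch), and contains the bridging point $\frac1\beta$, which is a periodic point of neither $g$ nor $h$.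
   Context: For $\gamma\in\mathbb{R}$ let $f_\gamma(x)=\gamma x(1-x)$ denote the logistic map; its nontrivial fixed point is $\frac{\gamma-1}{\gamma}$. The logistic IFS is the pair $\{g,h\}=\{f_\alpha,f_\beta\}$ with $\alpha<\beta$, where at each step $g$ is applied with probability $p\in(0,1)$ and $h$ with probability $1-p$, independently. An invariant set of the IFS is a set $\Lambda$ with $\Lambda=g(\Lambda)\cup h(\Lambda)$; a finite invariant set with $n$ points is called an $n$-point toss-and-catch. A bridging point is a point of $\Lambda$ that belongs to neither the union of all periodic orbits of $g$ nor the union of all periodic orbits of $h$. *)

theory Defs
  imports Complex_Main
begin

definition logistic :: "real \<Rightarrow> real \<Rightarrow> real" where
  "logistic \<gamma> x = \<gamma> * x * (1 - x)"

definition periodic_point :: "('a \<Rightarrow> 'a) \<Rightarrow> 'a \<Rightarrow> bool" where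
  "periodic_point f x \<longleftrightarrow> (\<exists>n>0. (f ^^ n) x = x)"

definition periodic_orbits_union :: "('a \<Rightarrow> 'a) \<Rightarrow> 'a set" where
  "periodic_orbits_union f = {y. \<exists>x. periodic_point f x \<and> (\<exists>k. y = (f ^^ k) x)}"

definition ifs_invariant :: "('a \<Rightarrow> 'a) \<Rightarrow> ('a \<Rightarrow> 'a) \<Rightarrow> 'a set \<Rightarrow> bool" where
  "ifs_invariant g h \<Lambda> \<longleftrightarrow> \<Lambda> = g ` \<Lambda> \<union> h ` \<Lambda>"

definition bridging_point :: "('a \<Rightarrow> 'a) \<Rightarrow> ('a \<Rightarrow> 'a) \<Rightarrow> 'a set \<Rightarrow> 'a \<Rightarrow> bool" where
  "bridging_point g h \<Lambda> x \<longleftrightarrow> x \<in> \<Lambda> \<and> x \<notin> periodic_orbits_union g \<and> x \<notin> periodic_orbits_union h"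

end

theory Submission
  imports Defs
begin

lemma periodic_iter:
  assumes "periodic_point f x" shows "periodic_point f ((f ^^ k) x)"
proof -
  obtain n where n: "n > 0" "(f ^^ n) x = x" using assms unfolding periodic_point_def by blast
  have "(f ^^ n) ((f ^^ k) x) = (f ^^ (n + k)) x" by (simp add: funpow_add)
  also have "\<dots> = (f ^^ (k + n)) x" by (simp add: add.commute)
  also have "\<dots> = (f ^^ k) x" using n(2) by (simp add: funpow_add)
  finally have "(f ^^ n) ((f ^^ k) x) = (f ^^ k) x" .
  then show ?thesis unfolding periodic_point_def using n(1) by (intro exI[of _ n] conjI)
qed

lemma orbits_union_periodic:
  "y \<in> periodic_orbits_union f \<Longrightarrow> periodic_point f y"
proof -
  assume "y \<in> periodic_orbits_union f"
  then obtain x k where "periodic_point f x" "y = (f ^^ k) x"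
    unfolding periodic_orbits_union_def by blast
  then show "periodic_point f y" using periodic_iter by simp
qed

lemma t_facts:
  fixes t :: real
  assumes "t = (root 3 (54 - 6 * sqrt 33) + root 3 (54 + 6 * sqrt 33)) / 6"
  shows "2 * t^3 = 2 * t + 1 \<and> t > 0"
proof -
  define a where "a = 54 - 6 * sqrt 33"
  define b where "b = 54 + 6 * sqrt 33"
  have s81: "sqrt 81 = 9" using real_sqrt_abs[of 9] by simp
  have "sqrt 33 < sqrt 81" by (rule real_sqrt_less_iff[of 33 81, THEN iffD2]) simp
  then have s33: "sqrt 33 < 9" using s81 by simp
  have s33': "sqrt 33 ^ 2 = 33" by simp
  have a0: "a > 0" using s33 unfolding a_def by simp
  have b0: "b > 0" unfolding a_def b_def by (simp add: add_pos_nonneg)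
  have ab: "a * b = 12 ^ 3" unfolding a_def b_def using s33' by (simp add: algebra_simps power2_eq_square)
  define u where "u = root 3 a"
  define v where "v = root 3 b"
  have u3: "u ^ 3 = a" unfolding u_def using a0 by (simp add: real_root_pow_pos2)
  have v3: "v ^ 3 = b" unfolding v_def using b0 by (simp add: real_root_pow_pos2)
  have uv: "u * v = 12"
  proof -
    have "u * v = root 3 (a * b)" unfolding u_def v_def by (simp add: real_root_mult)
    also have "\<dots> = 12" unfolding ab by (simp add: real_root_power_cancel)
    finally show ?thesis .
  qed
  have upos: "u > 0" unfolding u_def using a0 by simp
  have vpos: "v > 0" unfolding v_def using b0 by simp
  have sab: "a + b = 108" unfolding a_def b_def by simp
  have tdef: "t = (u + v) / 6" using assms unfolding u_def v_def a_def b_def by simp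
  have e1: "(u+v)^3 = u^3+v^3+3*(u*v)*(u+v)" by (simp add: algebra_simps power3_eq_cube)
  have e2: "(u+v)^3 = 108 + 36*(u+v)" unfolding e1 u3 v3 uv using sab by simp
  have e3: "u + v = 6 * t" using tdef by simp
  have "(6*t)^3 = 108 + 36*(6*t)" using e2 unfolding e3 .
  then have "2 * t^3 = 2 * t + 1" by (simp add: power_mult_distrib)
  moreover have "t > 0" using tdef upos vpos by simp
  ultimately show ?thesis by simp
qed

lemma t_bounds:
  fixes t :: real
  assumes ht: "2 * t^3 = 2 * t + 1" and t0: "t > 0"
  shows "t > 1.19 \<and> t < 1.192"
proof -
  have eq: "t * (t^2 - 1) = 1/2" using ht by (simp add: algebra_simps power3_eq_cube power2_eq_square)
  have t1: "t > 1"
  proof (rule ccontr)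
    assume "\<not> t > 1"
    then have "t^2 - 1 \<le> 0" using t0 by (simp add: power_le_one)
    then have "t * (t^2 - 1) \<le> 0" using t0 by (simp add: mult_nonneg_nonpos)
    then show False using eq by simp
  qed
  have up: "t < 1.192"
  proof (rule ccontr)
    assume "\<not> t < 1.192"
    then have h: "t \<ge> 1.192" by simp
    then have "t^2 \<ge> 1.192^2" by (rule power_mono) simp
    then have "t^2 - 1 \<ge> 0.420864" by (simp add: power2_eq_square)
    then have "t * (t^2 - 1) \<ge> 1.192 * 0.420864" using h by (intro mult_mono) auto
    then show False using eq by simp
  qed
  have lo: "t > 1.19"
  proof (rule ccontr)
    assume "\<not> t > 1.19"
    then have h: "t \<le> 1.19" by simp
    then have "t^2 \<le> 1.19^2" using t0 by (intro power_mono) auto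
    then have "t^2 - 1 \<le> 0.4161" by (simp add: power2_eq_square)
    moreover have "t^2 - 1 \<ge> 0" using t1 by (simp add: one_le_power)
    ultimately have "t * (t^2 - 1) \<le> 1.19 * 0.4161" using h t0 by (intro mult_mono) auto
    then show False using eq by simp
  qed
  show ?thesis using up lo by simp
qed

lemma red_m:
  fixes t X Y Q :: real
  assumes "2*t^3 = 2*t+1" "X - Y = Q * (2*t^3 - 2*t - 1)"
  shows "X = Y"
proof -
  have "2*t^3 - 2*t - 1 = 0" using assms(1) by simp
  then show ?thesis using assms(2) by simp
qed

theorem mainTheorem3:
  fixes \<alpha> \<beta> p_plus p_minus :: real and g h :: "real \<Rightarrow> real" and \<Lambda> :: "real set"
  assumes "\<alpha> = 1 + (root 3 (54 - 6 * sqrt 33) + root 3 (54 + 6 * sqrt 33)) / 6"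
      and "\<beta> = 1 + (root 3 (54 - 6 * sqrt 33) + root 3 (54 + 6 * sqrt 33)) / 3"
      and "g = logistic \<alpha>" and "h = logistic \<beta>"
      and "p_plus = (\<beta> + 1 + sqrt ((\<beta> + 1) * (\<beta> - 3))) / (2 * \<beta>)"
      and "p_minus = (\<beta> + 1 - sqrt ((\<beta> + 1) * (\<beta> - 3))) / (2 * \<beta>)"
      and "\<Lambda> = {(\<alpha> - 1) / \<alpha>, (\<beta> - 1) / \<beta>, p_minus, p_plus, 1 / \<beta>}"
  shows "h ((\<alpha> - 1) / \<alpha>) = p_plus \<and> g p_minus = (\<alpha> - 1) / \<alpha>
       \<and> g ((\<beta> - 1) / \<beta>) = p_minus \<and> g (1 / \<beta>) = p_minus \<and> g p_plus = 1 / \<beta>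
       \<and> card \<Lambda> = 5 \<and> ifs_invariant g h \<Lambda>
       \<and> bridging_point g h \<Lambda> (1 / \<beta>)
       \<and> \<not> periodic_point g (1 / \<beta>) \<and> \<not> periodic_point h (1 / \<beta>)"
proof -
  define t where "t = (root 3 (54 - 6 * sqrt 33) + root 3 (54 + 6 * sqrt 33)) / 6"
  have ht: "2 * t^3 = 2 * t + 1" and t0: "t > 0" using t_facts[OF t_def] by auto
  have tb: "t > 1.19" "t < 1.192" using t_bounds[OF ht t0] by auto
  have a: "\<alpha> = 1 + t" using assms(1) unfolding t_def by simp
  have b: "\<beta> = 1 + 2 * t" using assms(2) unfolding t_def by simp
  define c where "c = 1 + 2*t - 2*t^2"
  define q where "q = 4 + 2*t - 4*t^2"
  define u where "u = 4*t^2 - 2*t - 3"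
  define pm where "pm = 2*t^2 - 2*t"
  define pp where "pp = 2*t^2 - 2"
  have sq: "sqrt ((\<beta> + 1) * (\<beta> - 3)) = 2 * (2*t^2 - t - 1)"
  proof (rule real_sqrt_unique)
    show "(2 * (2*t^2 - t - 1))^2 = (\<beta> + 1) * (\<beta> - 3)" unfolding b by (rule red_m[OF ht, where Q="8*t - 8"]) algebra
    have "2*t^2 - t - 1 = (2*t+1)*(t-1)" by (simp add: algebra_simps power2_eq_square)
    also have "\<dots> \<ge> 0" using tb by simp
    finally show "0 \<le> 2 * (2*t^2 - t - 1)" by simp
  qed
  have bnz: "2 * \<beta> \<noteq> 0" "\<beta> \<noteq> 0" "\<alpha> \<noteq> 0" using a b tb by auto
  have ppv: "p_plus = pp"
  proof -
    have "\<beta> + 1 + 2 * (2*t^2 - t - 1) = pp * (2 * \<beta>)"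
      unfolding pp_def b by (rule red_m[OF ht, where Q="-4"]) algebra
    then show ?thesis unfolding assms(5) sq using bnz(1) by simp
  qed
  have pmv: "p_minus = pm"
  proof -
    have "\<beta> + 1 - 2 * (2*t^2 - t - 1) = pm * (2 * \<beta>)"
      unfolding pm_def b by (rule red_m[OF ht, where Q="-4"]) algebra
    then show ?thesis unfolding assms(6) sq using bnz(1) by simp
  qed
  have cv: "(\<alpha> - 1) / \<alpha> = c"
  proof -
    have "\<alpha> - 1 = c * \<alpha>" unfolding c_def a by (rule red_m[OF ht, where Q="1"]) algebra
    then show ?thesis using bnz(3) by simp
  qed
  have qv: "(\<beta> - 1) / \<beta> = q"
  proof -
    have "\<beta> - 1 = q * \<beta>" unfolding q_def b by (rule red_m[OF ht, where Q="4"]) algebra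
    then show ?thesis using bnz(2) by simp
  qed
  have uv: "1 / \<beta> = u"
  proof -
    have "1 = u * \<beta>" unfolding u_def b by (rule red_m[OF ht, where Q="-4"]) algebra
    then show ?thesis using bnz(2) by (simp add: divide_eq_eq)
  qed
  have gg: "g x = (1 + t) * x * (1 - x)" for x unfolding assms(3) logistic_def a ..
  have hh: "h x = (1 + 2*t) * x * (1 - x)" for x unfolding assms(4) logistic_def b ..
  have gc: "g c = c" unfolding gg c_def by (rule red_m[OF ht, where Q="1 + 2*t - 2*t^2"]) algebra
  have gq: "g q = pm" unfolding gg q_def pm_def by (rule red_m[OF ht, where Q="12 - 8*t^2"]) algebra
  have gpm: "g pm = c" unfolding gg c_def pm_def by (rule red_m[OF ht, where Q="1 + 2*t - 2*t^2"]) algebra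
  have gpp: "g pp = u" unfolding gg u_def pp_def by (rule red_m[OF ht, where Q="3 - 2*t - 2*t^2"]) algebra
  have gu: "g u = pm" unfolding gg u_def pm_def by (rule red_m[OF ht, where Q="12 - 8*t^2"]) algebra
  have hc: "h c = pp" unfolding hh c_def pp_def by (rule red_m[OF ht, where Q="-2 + 6*t - 4*t^2"]) algebra
  have hq: "h q = q" unfolding hh q_def by (rule red_m[OF ht, where Q="16 + 8*t - 16*t^2"]) algebra
  have hpm: "h pm = pp" unfolding hh pp_def pm_def by (rule red_m[OF ht, where Q="-2 + 6*t - 4*t^2"]) algebra
  have hpp: "h pp = pm" unfolding hh pp_def pm_def by (rule red_m[OF ht, where Q="6 - 2*t - 4*t^2"]) algebra
  have hu: "h u = q" unfolding hh u_def q_def by (rule red_m[OF ht, where Q="16 + 8*t - 16*t^2"]) algebra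
  have t2: "t^2 > 1.4161" "t^2 < 1.420864"
  proof -
    have "1.19^2 < t^2" using tb by (intro power_strict_mono) auto
    then show "t^2 > 1.4161" by (simp add: power2_eq_square)
    have "t^2 < 1.192^2" using tb by (intro power_strict_mono) auto
    then show "t^2 < 1.420864" by (simp add: power2_eq_square)
  qed
  have o1: "u < pm" unfolding u_def pm_def using tb t2 by simp
  have o2: "pm < c" unfolding c_def pm_def using tb t2 by simp
  have o3: "c < q" unfolding c_def q_def using tb t2 by simp
  have o4: "q < pp" unfolding q_def pp_def using tb t2 by simp
  note ord = o1 o2 o3 o4
  have L: "\<Lambda> = {c, q, pm, pp, u}" unfolding assms(7) cv qv ppv pmv uv ..
  have card: "card \<Lambda> = 5" unfolding L using ord by auto
  have inv: "ifs_invariant g h \<Lambda>"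
    unfolding ifs_invariant_def L using gc gq gpm gpp gu hc hq hpm hpp hu by auto
  have gorb: "(g ^^ Suc n) u \<in> {pm, c}" for n
  proof (induction n)
    case 0 then show ?case using gu by simp
  next
    case (Suc n) then show ?case using gpm gc by auto
  qed
  have horb: "(h ^^ Suc n) u = q" for n
    by (induction n) (use hu hq in auto)
  have npg: "\<not> periodic_point g u"
  proof
    assume "periodic_point g u"
    then obtain n where "n > 0" "(g ^^ n) u = u" unfolding periodic_point_def by blast
    then obtain m where "(g ^^ Suc m) u = u" by (cases n) auto
    then show False using gorb[of m] ord by auto
  qed
  have nph: "\<not> periodic_point h u"
  proof
    assume "periodic_point h u"
    then obtain n where "n > 0" "(h ^^ n) u = u" unfolding periodic_point_def by blast
    then obtain m where "(h ^^ Suc m) u = u" by (cases n) auto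
    then show False using horb[of m] ord by auto
  qed
  have br: "bridging_point g h \<Lambda> u"
    unfolding bridging_point_def L using npg nph orbits_union_periodic[of u g] orbits_union_periodic[of u h] by blast
  show ?thesis
    unfolding cv qv ppv pmv uv
    using gpp hc gpm gq gu card inv br npg nph by simp
qed

end
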